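(* Let $L\ge2$, $d,d_y\in\mathbb{N}_+$ with $m:=d-2d_y>0$. Let $W_l(t)\in\mathbb{R}^{d\times d}$ for $l\in[L-1]$ and $W_L(t)\in\mathbb{R}^{d_y\times d}$ be gradient descent iterates for the loss $\ell=\frac12\|W_{L:1}X-Y\|_F^2$, where $X\in\mathbb{R}^{d\times N}$ satisfies $XX^\top=I_d$ and $Y\in\mathbb{R}^{d_y\times N}$, with update $$W_l(t)=(1-\eta\lambda)W_l(t-1)-\eta\,W_{L:l+1}^\top(t-1)\,\Gamma(t-1)\,W_{l-1:1}^\top(t-1),\quad \Gamma(t)=(W_{L:1}(t)X-Y)X^\top,$$ learning rate $\eta>0$, weight decay $\lambda\ge0$, and initialization $W_l^\top(0)W_l(0)=\varepsilon^2I_d$ for $l\in[L-1]$ and $W_L(0)W_L^\top(0)=\varepsilon^2I_{d_y}$, $\varepsilon>0$. Then there exist orthonormal sets $\{u_i^{(l)}\}_{i=1}^m\subset\mathbb{R}^d$ for $l\in[L-1]$ and $\{v_i^{(l)}\}_{i=1}^m\subset\mathbb{R}^d$ for $l\in[L]$, with $v_i^{(l+1)}=u_i^{(l)}$ for all $l\in[L-1]$, $i\in[m]$, such that for all $t\ge0$ and $i\in[m]$: (A) $W_l(t)v_i^{(l)}=\rho(t)u_i^{(l)}$ for all $l\in[L-1]$; (B) $W_l^\top(t)u_i^{(l)}=\rho(t)v_i^{(l)}$ for all $l\in[L-1]$; (C) $W_{L:l+1}(t)u_i^{(l)}=0$ for all $l\in[L-1]$; (D) $\Gamma(t)W_{l-1:1}^\top(t)v_i^{(l)}=0$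 for all $l\in[L]$, where $\rho(0)=\varepsilon$ and $\rho(t)=\rho(t-1)(1-\eta\lambda)$ for $t\ge1$.
   Context: $[L]=\{1,\dots,L\}$. $W_{j:i}=W_j\cdots W_i$ and $W_{j:i}^\top=W_i^\top\cdots W_j^\top$ for $j\ge i$; both are the identity if $j<i$. *)

theory Defs
  imports "HOL-Analysis.Analysis"
begin

primrec sqprod_aux :: "(nat \<Rightarrow> real^'d^'d) \<Rightarrow> nat \<Rightarrow> nat \<Rightarrow> real^'d^'d" where
  "sqprod_aux W i 0 = mat 1"
| "sqprod_aux W i (Suc n) = W (i + n) ** sqprod_aux W i n"

text \<open>W_{j:i} = W_j ** ... ** W_i for j \<ge> i, identity if j < i.\<close>
definition sqprod :: "(nat \<Rightarrow> real^'d^'d) \<Rightarrow> nat \<Rightarrow> nat \<Rightarrow> real^'d^'d" where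
  "sqprod W j i = sqprod_aux W i (Suc j - i)"

text \<open>W_{L:l+1} = W_L ** W_{L-1} ** ... ** W_{l+1}, a d_y x d matrix (for l = L it is the identity,
  but that case is never used with this function; l ranges over 0..L-1).\<close>
definition topprod :: "real^'d^'dy \<Rightarrow> (nat \<Rightarrow> real^'d^'d) \<Rightarrow> nat \<Rightarrow> nat \<Rightarrow> real^'d^'dy" where
  "topprod WL W L l = WL ** sqprod W (L - 1) (l + 1)"

definition Gamma :: "real^'d^'dy \<Rightarrow> (nat \<Rightarrow> real^'d^'d) \<Rightarrow> nat \<Rightarrow> real^'N^'d \<Rightarrow> real^'N^'dy \<Rightarrow> real^'d^'dy" where
  "Gamma WL W L X Y = (topprod WL W L 0 ** X - Y) ** transpose X"

primrec rho :: "real \<Rightarrow> real \<Rightarrow> real \<Rightarrow> nat \<Rightarrow> real" where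
  "rho eps eta lam 0 = eps"
| "rho eps eta lam (Suc t) = rho eps eta lam t * (1 - eta * lam)"

definition orthonormal_fam :: "(nat \<Rightarrow> real^'d) \<Rightarrow> nat \<Rightarrow> bool" where
  "orthonormal_fam u m \<longleftrightarrow> (\<forall>i\<in>{1..m}. \<forall>j\<in>{1..m}. u i \<bullet> u j = (if i = j then 1 else 0))"

end

theory Submission
  imports Defs
begin

lemma dim_comp_sum:
  fixes U :: "'a::euclidean_space set"
  assumes "subspace U"
  shows "dim U + dim (U\<^sup>\<bottom>) = DIM('a)"
proof -
  have "dim (U \<union> U\<^sup>\<bottom>) = dim U + dim (U\<^sup>\<bottom>)"
    by (rule dim_orthogonal_sum) (auto simp: orthogonal_comp_def orthogonal_def)
  moreover have "span (U \<union> U\<^sup>\<bottom>) = UNIV"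
  proof -
    have "U + U\<^sup>\<bottom> \<subseteq> span (U \<union> U\<^sup>\<bottom>)"
      by (auto simp: set_plus_def span_base intro!: span_add)
    then show ?thesis using subspace_sum_orthogonal_comp[OF assms] by auto
  qed
  ultimately show ?thesis by (metis dim_UNIV dim_span)
qed

lemma dim_ker_ge:
  fixes f :: "'m::euclidean_space \<Rightarrow> 'n::euclidean_space"
  assumes "linear f"
  shows "dim {x. f x = 0} + DIM('n) \<ge> DIM('m)"
proof -
  have k: "{x. f x = 0} = (range (adjoint f))\<^sup>\<bottom>"
    using ker_orthogonal_comp_adjoint[OF assms] by auto
  have lin: "linear (adjoint f)" using adjoint_linear[OF assms] .
  have sub: "subspace (range (adjoint f))" using lin by (metis subspace_UNIV linear_subspace_image)
  have "dim (range (adjoint f)) \<le> DIM('n)"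
    using dim_image_le[OF lin, of UNIV] by simp
  then show ?thesis using dim_comp_sum[OF sub] k by simp
qed

lemma transpose_diff': "transpose (A - B) = transpose A - transpose (B :: real^'n^'m)"
  by (simp add: transpose_def vec_eq_iff)

lemma fwd:
  fixes W :: "nat \<Rightarrow> real^'d^'d" and v :: "nat \<Rightarrow> real^'d"
  assumes "\<forall>l\<in>{1..L-1}. W l *v v l = r *\<^sub>R v (Suc l)" "1 \<le> k" "k + n \<le> L"
  shows "sqprod_aux W k n *v v k = r^n *\<^sub>R v (k+n)"
  using assms(3)
proof (induction n)
  case 0
  then show ?case by simp
next
  case (Suc n)
  have "k + n \<in> {1..L-1}" using Suc.prems assms(2) by auto
  then have "W (k+n) *v v (k+n) = r *\<^sub>R v (Suc (k+n))" using assms(1) by blast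
  then show ?case using Suc
    by (simp add: matrix_vector_mul_assoc[symmetric] matrix_vector_mult_scaleR)
qed

lemma bwd:
  fixes W :: "nat \<Rightarrow> real^'d^'d" and v :: "nat \<Rightarrow> real^'d"
  assumes "\<forall>l\<in>{1..L-1}. transpose (W l) *v v (Suc l) = r *\<^sub>R v l" "1 \<le> k" "k + n \<le> L"
  shows "transpose (sqprod_aux W k n) *v v (k+n) = r^n *\<^sub>R v k"
  using assms(3)
proof (induction n)
  case 0
  then show ?case by simp
next
  case (Suc n)
  have "k + n \<in> {1..L-1}" using Suc.prems assms(2) by auto
  then have "transpose (W (k+n)) *v v (Suc (k+n)) = r *\<^sub>R v (k+n)" using assms(1) by blast
  then show ?case using Suc
    by (simp add: matrix_transpose_mul matrix_vector_mul_assoc[symmetric] matrix_vector_mult_scaleR)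
qed

lemma upd_apply:
  fixes A :: "real^'n^'m" and P :: "real^'k^'m" and G :: "real^'j^'k" and S :: "real^'n^'j"
  shows "(a *\<^sub>R A - c *\<^sub>R (P ** G ** S)) *v x = a *\<^sub>R (A *v x) - c *\<^sub>R (P *v (G *v (S *v x)))"
  by (simp only: matrix_vector_mult_diff_rdistrib scaleR_matrix_vector_assoc matrix_vector_mul_assoc matrix_mul_assoc)

lemma upd_apply_T:
  fixes A :: "real^'n^'m" and P :: "real^'k^'m" and G :: "real^'j^'k" and S :: "real^'n^'j"
  shows "transpose (a *\<^sub>R A - c *\<^sub>R (P ** G ** S)) *v x
     = a *\<^sub>R (transpose A *v x) - c *\<^sub>R (transpose S *v (transpose G *v (transpose P *v x)))"
  by (simp only: transpose_diff' transpose_scalar matrix_transpose_mul matrix_vector_mult_diff_rdistrib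
      scaleR_matrix_vector_assoc matrix_vector_mul_assoc matrix_mul_assoc)

lemma upd_apply2:
  fixes A :: "real^'n^'m" and G :: "real^'j^'m" and S :: "real^'n^'j"
  shows "(a *\<^sub>R A - c *\<^sub>R (G ** S)) *v x = a *\<^sub>R (A *v x) - c *\<^sub>R (G *v (S *v x))"
  by (simp only: matrix_vector_mult_diff_rdistrib scaleR_matrix_vector_assoc matrix_vector_mul_assoc)

lemma CD:
  fixes W :: "nat \<Rightarrow> real^'d^'d" and v :: "nat \<Rightarrow> real^'d"
    and WL :: "real^'d^'dy" and X :: "real^'N^'d" and Y :: "real^'N^'dy"
  assumes L: "L \<ge> 2" and X: "X ** transpose X = mat 1"
    and Y: "(Y ** transpose X) *v v 1 = 0"
    and F: "\<forall>l\<in>{1..L-1}. W l *v v l = r *\<^sub>R v (Suc l)"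
    and B: "\<forall>l\<in>{1..L-1}. transpose (W l) *v v (Suc l) = r *\<^sub>R v l"
    and E: "WL *v v L = 0"
  shows "(\<forall>l\<in>{1..L-1}. topprod WL W L l *v v (Suc l) = 0) \<and>
         (\<forall>l\<in>{1..L}. Gamma WL W L X Y *v (transpose (sqprod W (l - 1) 1) *v v l) = 0)"
proof (intro conjI ballI)
  fix l assume l: "l \<in> {1..L-1}"
  have s: "sqprod W (L-1) (l+1) = sqprod_aux W (Suc l) (L - Suc l)"
    unfolding sqprod_def using l L by (simp add: Suc_diff_Suc)
  have "sqprod_aux W (Suc l) (L - Suc l) *v v (Suc l) = r^(L - Suc l) *\<^sub>R v (Suc l + (L - Suc l))"
    by (rule fwd[OF F]) (use l in auto)
  moreover have "Suc l + (L - Suc l) = L" using l L by auto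
  ultimately show "topprod WL W L l *v v (Suc l) = 0"
    unfolding topprod_def s by (simp add: matrix_vector_mul_assoc[symmetric] matrix_vector_mult_scaleR E)
next
  fix l assume l: "l \<in> {1..L}"
  have T0: "topprod WL W L 0 *v v 1 = 0"
  proof -
    have s: "sqprod W (L-1) (0+1) = sqprod_aux W 1 (L - 1)"
      unfolding sqprod_def using L by simp
    have "sqprod_aux W 1 (L - 1) *v v 1 = r^(L - 1) *\<^sub>R v (1 + (L - 1))"
      by (rule fwd[OF F]) (use L in auto)
    moreover have "1 + (L - 1) = L" using L by auto
    ultimately show ?thesis
      unfolding topprod_def s by (simp add: matrix_vector_mul_assoc[symmetric] matrix_vector_mult_scaleR E)
  qed
  have G: "Gamma WL W L X Y *v v 1 = 0"
  proof -
    have "Gamma WL W L X Y *v v 1 = (topprod WL W L 0 ** X - Y) *v (transpose X *v v 1)"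
      unfolding Gamma_def by (rule matrix_vector_mul_assoc[symmetric])
    also have "\<dots> = (topprod WL W L 0 ** X) *v (transpose X *v v 1) - Y *v (transpose X *v v 1)"
      by (rule matrix_vector_mult_diff_rdistrib)
    also have "(topprod WL W L 0 ** X) *v (transpose X *v v 1) = topprod WL W L 0 *v ((X ** transpose X) *v v 1)"
      by (simp only: matrix_vector_mul_assoc[symmetric])
    also have "Y *v (transpose X *v v 1) = (Y ** transpose X) *v v 1"
      by (rule matrix_vector_mul_assoc)
    also have "topprod WL W L 0 *v ((X ** transpose X) *v v 1) - (Y ** transpose X) *v v 1 = 0"
      using X Y T0 by simp
    finally show ?thesis .
  qed
  have s: "sqprod W (l-1) 1 = sqprod_aux W 1 (l - 1)"
    unfolding sqprod_def using l by simp
  have "transpose (sqprod_aux W 1 (l - 1)) *v v (1 + (l - 1)) = r^(l - 1) *\<^sub>R v 1"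
    by (rule bwd[OF B]) (use l in auto)
  moreover have "1 + (l - 1) = l" using l by auto
  ultimately have "transpose (sqprod W (l - 1) 1) *v v l = r^(l - 1) *\<^sub>R v 1"
    unfolding s by simp
  then show "Gamma WL W L X Y *v (transpose (sqprod W (l - 1) 1) *v v l) = 0"
    by (metis G matrix_vector_mult_scaleR scaleR_zero_right)
qed

theorem lemma2:
  fixes L m :: nat
    and eta lam eps :: real
    and X :: "real^'N^'d" and Y :: "real^'N^'dy"
    and W :: "nat \<Rightarrow> nat \<Rightarrow> real^'d^'d"
    and WL :: "nat \<Rightarrow> real^'d^'dy"
  assumes L: "L \<ge> 2"
    and m_def: "m = CARD('d) - 2 * CARD('dy)"
    and m_pos: "2 * CARD('dy) < CARD('d)"
    and X: "X ** transpose X = mat 1"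
    and eta_pos: "eta > 0" and lam_nn: "lam \<ge> 0" and eps_pos: "eps > 0"
    and init_W: "\<And>l. l \<in> {1..L-1} \<Longrightarrow> transpose (W 0 l) ** W 0 l = eps\<^sup>2 *\<^sub>R mat 1"
    and init_WL: "WL 0 ** transpose (WL 0) = eps\<^sup>2 *\<^sub>R mat 1"
    and upd_W: "\<And>t l. l \<in> {1..L-1} \<Longrightarrow>
        W (Suc t) l = (1 - eta * lam) *\<^sub>R W t l
          - eta *\<^sub>R (transpose (topprod (WL t) (W t) L l) ** Gamma (WL t) (W t) L X Y
                       ** transpose (sqprod (W t) (l - 1) 1))"
    and upd_WL: "\<And>t. WL (Suc t) = (1 - eta * lam) *\<^sub>R WL t
          - eta *\<^sub>R (Gamma (WL t) (W t) L X Y ** transpose (sqprod (W t) (L - 1) 1))"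
  shows "\<exists>(u :: nat \<Rightarrow> nat \<Rightarrow> real^'d) (v :: nat \<Rightarrow> nat \<Rightarrow> real^'d).
     (\<forall>l\<in>{1..L-1}. orthonormal_fam (u l) m) \<and>
     (\<forall>l\<in>{1..L}. orthonormal_fam (v l) m) \<and>
     (\<forall>l\<in>{1..L-1}. \<forall>i\<in>{1..m}. v (l + 1) i = u l i) \<and>
     (\<forall>t. \<forall>i\<in>{1..m}.
        (\<forall>l\<in>{1..L-1}. W t l *v v l i = rho eps eta lam t *\<^sub>R u l i) \<and>
        (\<forall>l\<in>{1..L-1}. transpose (W t l) *v u l i = rho eps eta lam t *\<^sub>R v l i) \<and>
        (\<forall>l\<in>{1..L-1}. topprod (WL t) (W t) L l *v u l i = 0) \<and>
        (\<forall>l\<in>{1..L}. Gamma (WL t) (W t) L X Y *v (transpose (sqprod (W t) (l - 1) 1) *v v l i) = 0))"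
proof -
  let ?r = "rho eps eta lam"
  define f where "f = (\<lambda>x::real^'d. ((Y ** transpose X) *v x, (WL 0 ** sqprod (W 0) (L-1) 1) *v x))"
  have linf: "linear f"
    unfolding f_def linear_iff
    by (auto simp: matrix_vector_right_distrib matrix_vector_mult_scaleR)
  have dk: "dim {x. f x = 0} + DIM((real^'dy) \<times> (real^'dy)) \<ge> DIM(real^'d)"
    by (rule dim_ker_ge[OF linf])
  then have mle: "m \<le> dim {x. f x = 0}" using m_def by simp
  have subK: "subspace {x. f x = 0}" using linf by (rule linear_subspace_kernel)
  obtain B where BK: "B \<subseteq> {x. f x = 0}" and Bo: "pairwise orthogonal B"
     and Bn: "\<And>x. x \<in> B \<Longrightarrow> norm x = 1" and Bi: "independent B" and Bc: "card B = dim {x. f x = 0}"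
    using orthonormal_basis_subspace[OF subK] by metis
  obtain C where CB: "C \<subseteq> B" and Cc: "card C = m" and Cf: "finite C"
    using obtain_subset_with_card_n[of m B] mle Bc by metis
  obtain b where bb: "bij_betw b {1..m} C"
    using ex_bij_betw_nat_finite_1[OF Cf] Cc by metis
  have bB: "i \<in> {1..m} \<Longrightarrow> b i \<in> B" for i
    using bb CB by (auto simp: bij_betw_def)
  have bK: "i \<in> {1..m} \<Longrightarrow> f (b i) = 0" for i
    using bB BK by blast
  have borth: "orthonormal_fam b m"
    unfolding orthonormal_fam_def
  proof (intro ballI)
    fix i j assume i: "i \<in> {1..m}" and j: "j \<in> {1..m}"
    have bi: "b i \<in> B" "b j \<in> B" using bB i j by auto
    show "b i \<bullet> b j = (if i = j then 1 else 0)"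
    proof (cases "i = j")
      case True
      then show ?thesis using Bn[OF bi(1)] by (metis norm_eq_1)
    next
      case False
      then have "b i \<noteq> b j" using bb i j by (metis bij_betw_def inj_on_def)
      then have "orthogonal (b i) (b j)" using Bo bi by (meson pairwiseD)
      then show ?thesis using False by (simp add: orthogonal_def)
    qed
  qed
  define v where "v = (\<lambda>l i. (1/eps)^(l-1) *\<^sub>R (sqprod_aux (W 0) 1 (l-1) *v b i))"
  define u where "u = (\<lambda>l i. v (Suc l) i)"
  have v1: "v (Suc 0) i = b i" for i by (simp add: v_def)
  have A0: "W 0 l *v v l i = eps *\<^sub>R v (Suc l) i" if l: "l \<in> {1..L-1}" for l i
  proof -
    obtain k where k: "l = Suc k" using l by (cases l) auto
    have sq: "sqprod_aux (W 0) (Suc 0) l = W 0 l ** sqprod_aux (W 0) (Suc 0) (l - Suc 0)"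
      by (simp add: k)
    have p: "(1/eps)^(l - Suc 0) = eps * (1/eps)^l"
      using eps_pos by (simp add: k)
    show ?thesis unfolding v_def
      by (simp add: sq matrix_vector_mul_assoc[symmetric] matrix_vector_mult_scaleR p)
  qed
  have WtW: "transpose (W 0 l) *v (W 0 l *v x) = eps\<^sup>2 *\<^sub>R x" if l: "l \<in> {1..L-1}" for l x
    by (simp add: matrix_vector_mul_assoc init_W[OF l] scaleR_matrix_vector_assoc[symmetric])
  have B0: "transpose (W 0 l) *v v (Suc l) i = eps *\<^sub>R v l i" if l: "l \<in> {1..L-1}" for l i
  proof -
    have "v (Suc l) i = (1/eps) *\<^sub>R (W 0 l *v v l i)" using A0[OF l, of i] eps_pos by simp
    then show ?thesis using WtW[OF l] eps_pos
      by (simp add: matrix_vector_mult_scaleR power2_eq_square)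
  qed
  have vorth: "orthonormal_fam (v l) m" if "l \<in> {1..L}" for l
    using that
  proof (induction l)
    case 0 then show ?case by simp
  next
    case (Suc l)
    show ?case
    proof (cases "l = 0")
      case True then show ?thesis using borth v1 by simp
    next
      case False
      then have l: "l \<in> {1..L-1}" using Suc.prems by auto
      then have IH: "orthonormal_fam (v l) m" using Suc.IH by auto
      have "v (Suc l) i \<bullet> v (Suc l) j = v l i \<bullet> v l j" for i j
      proof -
        have e: "v (Suc l) k = (1/eps) *\<^sub>R (W 0 l *v v l k)" for k using A0[OF l, of k] eps_pos by simp
        have "(W 0 l *v v l i) \<bullet> (W 0 l *v v l j) = v l i \<bullet> (transpose (W 0 l) *v (W 0 l *v v l j))"
          by (metis dot_lmul_matrix vector_transpose_matrix)
        also have "\<dots> = eps\<^sup>2 * (v l i \<bullet> v l j)" using WtW[OF l] by simp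
        finally show ?thesis unfolding e using eps_pos by (simp add: power2_eq_square)
      qed
      then show ?thesis using IH unfolding orthonormal_fam_def by simp
    qed
  qed
  have E0: "WL 0 *v v L i = 0" if "i \<in> {1..m}" for i
  proof -
    have s: "sqprod (W 0) (L-1) 1 = sqprod_aux (W 0) 1 (L - 1)"
      unfolding sqprod_def using L by simp
    have "(WL 0 ** sqprod (W 0) (L-1) 1) *v b i = 0" using bK[OF that] by (simp add: f_def zero_prod_def)
    then show ?thesis unfolding v_def s
      by (simp add: matrix_vector_mult_scaleR matrix_vector_mul_assoc)
  qed
  have Y0: "(Y ** transpose X) *v v 1 i = 0" if "i \<in> {1..m}" for i
    using bK[OF that] by (simp add: f_def v1 zero_prod_def)
  define inv where "inv = (\<lambda>t. \<forall>i\<in>{1..m}.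
      (\<forall>l\<in>{1..L-1}. W t l *v v l i = ?r t *\<^sub>R v (Suc l) i) \<and>
      (\<forall>l\<in>{1..L-1}. transpose (W t l) *v v (Suc l) i = ?r t *\<^sub>R v l i) \<and>
      WL t *v v L i = 0)"
  have CDt: "(\<forall>l\<in>{1..L-1}. topprod (WL t) (W t) L l *v v (Suc l) i = 0) \<and>
         (\<forall>l\<in>{1..L}. Gamma (WL t) (W t) L X Y *v (transpose (sqprod (W t) (l - 1) 1) *v v l i) = 0)"
    if "inv t" "i \<in> {1..m}" for t i
    using CD[of L X Y "\<lambda>l. v l i" "W t" "?r t" "WL t"] L X Y0[OF that(2)] that
    unfolding inv_def by auto
  have invt: "inv t" for t
  proof (induction t)
    case 0
    then show ?case unfolding inv_def using A0 B0 E0 by simp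
  next
    case (Suc t)
    show ?case unfolding inv_def
    proof (intro ballI conjI)
      fix i assume i: "i \<in> {1..m}"
      note C = CDt[OF Suc i, THEN conjunct1] and D = CDt[OF Suc i, THEN conjunct2]
      have It: "\<forall>l\<in>{1..L-1}. W t l *v v l i = ?r t *\<^sub>R v (Suc l) i"
        "\<forall>l\<in>{1..L-1}. transpose (W t l) *v v (Suc l) i = ?r t *\<^sub>R v l i"
        "WL t *v v L i = 0"
        using Suc i unfolding inv_def by auto
      {
        fix l assume l: "l \<in> {1..L-1}"
        have Dl: "Gamma (WL t) (W t) L X Y *v (transpose (sqprod (W t) (l - 1) 1) *v v l i) = 0"
          using D l by auto
        show "W (Suc t) l *v v l i = ?r (Suc t) *\<^sub>R v (Suc l) i"
          unfolding upd_W[OF l] upd_apply Dl using It(1) l by simp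
      }
      {
        fix l assume l: "l \<in> {1..L-1}"
        have Cl: "topprod (WL t) (W t) L l *v v (Suc l) i = 0" using C l by auto
        show "transpose (W (Suc t) l) *v v (Suc l) i = ?r (Suc t) *\<^sub>R v l i"
          unfolding upd_W[OF l] upd_apply_T transpose_transpose Cl using It(2) l by simp
      }
      have DL: "Gamma (WL t) (W t) L X Y *v (transpose (sqprod (W t) (L - 1) 1) *v v L i) = 0"
        using D L by auto
      show "WL (Suc t) *v v L i = 0"
        unfolding upd_WL upd_apply2 DL using It(3) by simp
    qed
  qed
  have c1: "\<forall>l\<in>{1..L-1}. orthonormal_fam (u l) m"
    using vorth by (auto simp: u_def)
  have c2: "\<forall>l\<in>{1..L}. orthonormal_fam (v l) m" using vorth by auto
  have c3: "\<forall>l\<in>{1..L-1}. \<forall>i\<in>{1..m}. v (l + 1) i = u l i" by (simp add: u_def)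
  have c4: "\<forall>t. \<forall>i\<in>{1..m}.
        (\<forall>l\<in>{1..L-1}. W t l *v v l i = ?r t *\<^sub>R u l i) \<and>
        (\<forall>l\<in>{1..L-1}. transpose (W t l) *v u l i = ?r t *\<^sub>R v l i) \<and>
        (\<forall>l\<in>{1..L-1}. topprod (WL t) (W t) L l *v u l i = 0) \<and>
        (\<forall>l\<in>{1..L}. Gamma (WL t) (W t) L X Y *v (transpose (sqprod (W t) (l - 1) 1) *v v l i) = 0)"
  proof (intro allI ballI)
    fix t i assume i: "i \<in> {1..m}"
    have I: "inv t" by (rule invt)
    show "(\<forall>l\<in>{1..L-1}. W t l *v v l i = ?r t *\<^sub>R u l i) \<and>
        (\<forall>l\<in>{1..L-1}. transpose (W t l) *v u l i = ?r t *\<^sub>R v l i) \<and>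
        (\<forall>l\<in>{1..L-1}. topprod (WL t) (W t) L l *v u l i = 0) \<and>
        (\<forall>l\<in>{1..L}. Gamma (WL t) (W t) L X Y *v (transpose (sqprod (W t) (l - 1) 1) *v v l i) = 0)"
      using I i CDt[OF I i] unfolding inv_def u_def by blast
  qed
  show ?thesis using c1 c2 c3 c4 by blast
qed

end
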